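(* Let $C$ be a contractible globular extension with a pregroupoidal structure and $G$ an $\infty$-groupoid of type $C$. For every $n\ge 1$, $\Pi_n(G)$ is a groupoid.
   Context: The globe category $\mathbb{G}$ has objects $D_n$ ($n\ge0$), generated by $\sigma_n,\tau_n\colon D_{n-1}\to D_n$ ($n\ge1$) with $\sigma_{n+1}\sigma_n=\tau_{n+1}\sigma_n$, $\sigma_{n+1}\tau_n=\tau_{n+1}\tau_n$; $\sigma^i_j=\sigma_i\cdots\sigma_{j+1}$, $\tau^i_j=\tau_i\cdots\tau_{j+1}$. A table of dimensions: integers $i_1,\dots,i_n,i'_1,\dots,i'_{n-1}$ with $i_k>i'_k<i_{k+1}$; dimension = largest entry. In a category $C$ under $\mathbb{G}$, its globular sum is the colimit of $D_{i_1}\xleftarrow{\sigma^{i_1}_{i'_1}}D_{i'_1}\xrightarrow{\tau^{i_2}_{i'_1}}D_{i_2}\leftarrow\cdots\xrightarrow{\tau^{i_n}_{i'_{n-1}}}D_{i_n}$, written $D_{i_1}\amalg_{D_{i'_1}}\cdots\amalg_{D_{i'_{n-1}}}D_{i_n}$. A globular extension is a category under $\mathbb{G}$ with all globular sums. $f,g\colon D_n\to X$ are globularly parallel if $n=0$ or $f\sigma_n=g\sigma_n$, $f\tau_n=g\tau_n$; a lifting of $(f,g)$ is $h\colon D_{n+1}\to X$ with $h\sigma_{n+1}=f$, $h\tau_{n+1}=g$; $(f,g)\colon D_n\to S$ is admissible if globularly parallel with $S$ a globular sum of dimension $\le n+1$; $C$ is contractible if every admissible pair has a lifting. An $\infty$-groupoid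 of type $C$ is a presheaf $G$ on $C$ such that each canonical map $G(D_{i_1}\amalg_{D_{i'_1}}\cdots\amalg_{D_{i'_{n-1}}}D_{i_n})\to G_{i_1}\times_{G_{i'_1}}\cdots\times_{G_{i'_{n-1}}}G_{i_n}$ is bijective, where $G_i=G(D_i)$ ($i$-arrows), $s=G(\sigma_i)$, $t=G(\tau_i)$ (source, target), $s^i_j=G(\sigma^i_j)$, $t^i_j=G(\tau^i_j)$, and the fiber product consists of $(u_1,\dots,u_n)$ with $s^{i_k}_{i'_k}(u_k)=t^{i_{k+1}}_{i'_k}(u_{k+1})$. A pregroupoidal structure on $C$ consists of morphisms $\nabla^i_j\colon D_i\to D_i\amalg_{D_j}D_i$ ($i>j\ge0$), $\kappa_i\colon D_{i+1}\to D_i$, $w^i_j\colon D_i\to D_i$ with $\nabla^i_{i-1}\sigma_i=\epsilon_2\sigma_i$, $\nabla^i_{i-1}\tau_i=\epsilon_1\tau_i$ ($\epsilon_1,\epsilon_2$ the canonical inclusions of the first and second summand), $\nabla^i_j\sigma_i=(\sigma_i\amalg_{D_j}\sigma_i)\nabla^{i-1}_j$, $\nabla^i_j\tau_i=(\tau_i\amalg_{D_j}\tau_i)\nabla^{i-1}_j$ for $j<i-1$, $\kappa_i\sigma_{i+1}=\kappa_i\tau_{i+1}=\mathrm{id}$, $w^i_{i-1}\sigma_i=\tau_i$, $w^i_{i-1}\tau_i=\sigma_i$, $w^i_j\sigma_i=\sigma_iw^{i-1}_j$, $w^i_j\tau_i=\tau_iw^{i-1}_j$ for $j<i-1$. It induces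 on $G$: compositions $v\ast^i_ju=G(\nabla^i_j)(\xi)$ for $s^i_j(v)=t^i_j(u)$, $\xi$ corresponding to $(v,u)$; units $k_i=G(\kappa_i)\colon G_i\to G_{i+1}$. For $n$-arrows $u,v$, $u\sim v$ if some $(n+1)$-arrow has source $u$ and target $v$; this is an equivalence relation compatible with $\ast^n_{n-1}$. $\Pi_n(G)$ ($n\ge1$) is the graph with objects $G_{n-1}$, arrows $G_n/\sim$ with source/target induced by $s,t$, composition induced by $\ast^n_{n-1}$ and identities induced by $k_{n-1}$. *)

theory Defs
  imports Main
begin

text \<open>A category under the globe category together with a chosen globular sum for every
table of dimensions. Composition convention: Cmp g f is g after f.\<close>

record ('o, 'm) gext =
  Ob  :: "'o set"
  Ar  :: "'m set"
  Dom :: "'m \<Rightarrow> 'o"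
  Cod :: "'m \<Rightarrow> 'o"
  Cmp :: "'m \<Rightarrow> 'm \<Rightarrow> 'm"
  Idm :: "'o \<Rightarrow> 'm"
  Dg  :: "nat \<Rightarrow> 'o"            \<comment> \<open>image of D_n\<close>
  sg  :: "nat \<Rightarrow> 'm"            \<comment> \<open>image of sigma_n : D_(n-1) -> D_n, n >= 1\<close>
  tu  :: "nat \<Rightarrow> 'm"            \<comment> \<open>image of tau_n : D_(n-1) -> D_n, n >= 1\<close>
  gs  :: "nat list \<times> nat list \<Rightarrow> 'o"          \<comment> \<open>chosen globular sum of a table\<close>
  gi  :: "nat list \<times> nat list \<Rightarrow> nat \<Rightarrow> 'm"  \<comment> \<open>its canonical inclusions (0-indexed)\<close>

definition hom :: "('o, 'm) gext \<Rightarrow> 'o \<Rightarrow> 'o \<Rightarrow> 'm set" where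
  "hom C a b = {f \<in> Ar C. Dom C f = a \<and> Cod C f = b}"

definition is_category :: "('o, 'm) gext \<Rightarrow> bool" where
  "is_category C \<longleftrightarrow>
     (\<forall>f \<in> Ar C. Dom C f \<in> Ob C \<and> Cod C f \<in> Ob C) \<and>
     (\<forall>a \<in> Ob C. Idm C a \<in> hom C a a) \<and>
     (\<forall>f \<in> Ar C. \<forall>g \<in> Ar C. Dom C g = Cod C f \<longrightarrow> Cmp C g f \<in> hom C (Dom C f) (Cod C g)) \<and>
     (\<forall>f \<in> Ar C. Cmp C f (Idm C (Dom C f)) = f \<and> Cmp C (Idm C (Cod C f)) f = f) \<and>
     (\<forall>f \<in> Ar C. \<forall>g \<in> Ar C. \<forall>h \<in> Ar C. Dom C g = Cod C f \<longrightarrow> Dom C h = Cod C g \<longrightarrow>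
        Cmp C h (Cmp C g f) = Cmp C (Cmp C h g) f)"

text \<open>A functor from the globe category: by its presentation, this is the data of objects
D_n and arrows sigma_n, tau_n : D_(n-1) -> D_n satisfying the globular relations.\<close>

definition under_globe :: "('o, 'm) gext \<Rightarrow> bool" where
  "under_globe C \<longleftrightarrow>
     (\<forall>n. Dg C n \<in> Ob C) \<and>
     (\<forall>n \<ge> 1. sg C n \<in> hom C (Dg C (n - 1)) (Dg C n) \<and> tu C n \<in> hom C (Dg C (n - 1)) (Dg C n)) \<and>
     (\<forall>n \<ge> 1. Cmp C (sg C (n + 1)) (sg C n) = Cmp C (tu C (n + 1)) (sg C n) \<and>
              Cmp C (sg C (n + 1)) (tu C n) = Cmp C (tu C (n + 1)) (tu C n))"

text \<open>Iterated sources/targets: sigma^i_j = sigma_i ... sigma_(j+1) : D_j -> D_i (identity if i = j).\<close>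

fun sgit :: "('o, 'm) gext \<Rightarrow> nat \<Rightarrow> nat \<Rightarrow> 'm" where
  "sgit C 0 j = Idm C (Dg C j)"
| "sgit C (Suc i) j = (if Suc i \<le> j then Idm C (Dg C j) else Cmp C (sg C (Suc i)) (sgit C i j))"

fun tuit :: "('o, 'm) gext \<Rightarrow> nat \<Rightarrow> nat \<Rightarrow> 'm" where
  "tuit C 0 j = Idm C (Dg C j)"
| "tuit C (Suc i) j = (if Suc i \<le> j then Idm C (Dg C j) else Cmp C (tu C (Suc i)) (tuit C i j))"

definition table :: "nat list \<times> nat list \<Rightarrow> bool" where
  "table T \<longleftrightarrow> (let is = fst T; js = snd T in
     length is = length js + 1 \<and>
     (\<forall>k < length js. js ! k < is ! k \<and> js ! k < is ! (k + 1)))"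

definition table_dim :: "nat list \<times> nat list \<Rightarrow> nat" where
  "table_dim T = Max (set (fst T) \<union> set (snd T))"

definition cocone :: "('o, 'm) gext \<Rightarrow> nat list \<times> nat list \<Rightarrow> 'o \<Rightarrow> (nat \<Rightarrow> 'm) \<Rightarrow> bool" where
  "cocone C T X c \<longleftrightarrow> (let is = fst T; js = snd T in
     (\<forall>k < length is. c k \<in> hom C (Dg C (is ! k)) X) \<and>
     (\<forall>k < length js. Cmp C (c k) (sgit C (is ! k) (js ! k)) =
                      Cmp C (c (k + 1)) (tuit C (is ! (k + 1)) (js ! k))))"

definition is_colimit :: "('o, 'm) gext \<Rightarrow> nat list \<times> nat list \<Rightarrow> 'o \<Rightarrow> (nat \<Rightarrow> 'm) \<Rightarrow> bool" where
  "is_colimit C T S \<iota> \<longleftrightarrow> S \<in> Ob C \<and> cocone C T S \<iota> \<and>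
     (\<forall>X \<in> Ob C. \<forall>c. cocone C T X c \<longrightarrow>
        (\<exists>!h. h \<in> hom C S X \<and> (\<forall>k < length (fst T). Cmp C h (\<iota> k) = c k)))"

definition globular_extension :: "('o, 'm) gext \<Rightarrow> bool" where
  "globular_extension C \<longleftrightarrow> is_category C \<and> under_globe C \<and>
     (\<forall>T. table T \<longrightarrow> is_colimit C T (gs C T) (gi C T))"

definition glob_parallel :: "('o, 'm) gext \<Rightarrow> nat \<Rightarrow> 'm \<Rightarrow> 'm \<Rightarrow> bool" where
  "glob_parallel C n f g \<longleftrightarrow> n = 0 \<or>
     (Cmp C f (sg C n) = Cmp C g (sg C n) \<and> Cmp C f (tu C n) = Cmp C g (tu C n))"

definition contractible :: "('o, 'm) gext \<Rightarrow> bool" where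
  "contractible C \<longleftrightarrow>
     (\<forall>n T f g. table T \<and> table_dim T \<le> n + 1 \<and>
        f \<in> hom C (Dg C n) (gs C T) \<and> g \<in> hom C (Dg C n) (gs C T) \<and> glob_parallel C n f g \<longrightarrow>
        (\<exists>h \<in> hom C (Dg C (n + 1)) (gs C T).
            Cmp C h (sg C (n + 1)) = f \<and> Cmp C h (tu C (n + 1)) = g))"

text \<open>The binary globular sum D_i amalg_(D_j) D_i and the map sigma_i amalg sigma_i
(resp. tau_i amalg tau_i) : D_(i-1) amalg_(D_j) D_(i-1) -> D_i amalg_(D_j) D_i.\<close>

abbreviation bin :: "nat \<Rightarrow> nat \<Rightarrow> nat list \<times> nat list" where
  "bin i j \<equiv> ([i, i], [j])"

definition amalg_map :: "('o, 'm) gext \<Rightarrow> (nat \<Rightarrow> 'm) \<Rightarrow> nat \<Rightarrow> nat \<Rightarrow> 'm" where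
  "amalg_map C m i j = (THE h. h \<in> hom C (gs C (bin (i - 1) j)) (gs C (bin i j)) \<and>
      Cmp C h (gi C (bin (i - 1) j) 0) = Cmp C (gi C (bin i j) 0) (m i) \<and>
      Cmp C h (gi C (bin (i - 1) j) 1) = Cmp C (gi C (bin i j) 1) (m i))"

record 'm pregrp =
  nab :: "nat \<Rightarrow> nat \<Rightarrow> 'm"
  kap :: "nat \<Rightarrow> 'm"
  ww  :: "nat \<Rightarrow> nat \<Rightarrow> 'm"

definition pregroupoidal :: "('o, 'm) gext \<Rightarrow> 'm pregrp \<Rightarrow> bool" where
  "pregroupoidal C P \<longleftrightarrow>
     (\<forall>i j. j < i \<longrightarrow> nab P i j \<in> hom C (Dg C i) (gs C (bin i j)) \<and> ww P i j \<in> hom C (Dg C i) (Dg C i)) \<and>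
     (\<forall>i. kap P i \<in> hom C (Dg C (i + 1)) (Dg C i)) \<and>
     (\<forall>i \<ge> 1.
        Cmp C (nab P i (i - 1)) (sg C i) = Cmp C (gi C (bin i (i - 1)) 1) (sg C i) \<and>
        Cmp C (nab P i (i - 1)) (tu C i) = Cmp C (gi C (bin i (i - 1)) 0) (tu C i)) \<and>
     (\<forall>i j. j + 1 < i \<longrightarrow>
        Cmp C (nab P i j) (sg C i) = Cmp C (amalg_map C (sg C) i j) (nab P (i - 1) j) \<and>
        Cmp C (nab P i j) (tu C i) = Cmp C (amalg_map C (tu C) i j) (nab P (i - 1) j)) \<and>
     (\<forall>i. Cmp C (kap P i) (sg C (i + 1)) = Idm C (Dg C i) \<and>
          Cmp C (kap P i) (tu C (i + 1)) = Idm C (Dg C i)) \<and>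
     (\<forall>i \<ge> 1. Cmp C (ww P i (i - 1)) (sg C i) = tu C i \<and>
              Cmp C (ww P i (i - 1)) (tu C i) = sg C i) \<and>
     (\<forall>i j. j + 1 < i \<longrightarrow>
        Cmp C (ww P i j) (sg C i) = Cmp C (sg C i) (ww P (i - 1) j) \<and>
        Cmp C (ww P i j) (tu C i) = Cmp C (tu C i) (ww P (i - 1) j))"

text \<open>A presheaf (contravariant set-valued functor) on C: Gob a is G(a), Gar f is G(f).\<close>

definition presheaf :: "('o, 'm) gext \<Rightarrow> ('o \<Rightarrow> 'x set) \<Rightarrow> ('m \<Rightarrow> 'x \<Rightarrow> 'x) \<Rightarrow> bool" where
  "presheaf C Gob Gar \<longleftrightarrow>
     (\<forall>f \<in> Ar C. \<forall>x \<in> Gob (Cod C f). Gar f x \<in> Gob (Dom C f)) \<and>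
     (\<forall>a \<in> Ob C. \<forall>x \<in> Gob a. Gar (Idm C a) x = x) \<and>
     (\<forall>f \<in> Ar C. \<forall>g \<in> Ar C. Dom C g = Cod C f \<longrightarrow>
        (\<forall>x \<in> Gob (Cod C g). Gar (Cmp C g f) x = Gar f (Gar g x)))"

definition fiber_prod :: "('o, 'm) gext \<Rightarrow> ('o \<Rightarrow> 'x set) \<Rightarrow> ('m \<Rightarrow> 'x \<Rightarrow> 'x) \<Rightarrow>
    nat list \<times> nat list \<Rightarrow> 'x list set" where
  "fiber_prod C Gob Gar T = (let is = fst T; js = snd T in
     {us. length us = length is \<and> (\<forall>k < length is. us ! k \<in> Gob (Dg C (is ! k))) \<and>
          (\<forall>k < length js. Gar (sgit C (is ! k) (js ! k)) (us ! k) =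
                           Gar (tuit C (is ! (k + 1)) (js ! k)) (us ! (k + 1)))})"

definition infty_groupoid :: "('o, 'm) gext \<Rightarrow> ('o \<Rightarrow> 'x set) \<Rightarrow> ('m \<Rightarrow> 'x \<Rightarrow> 'x) \<Rightarrow> bool" where
  "infty_groupoid C Gob Gar \<longleftrightarrow> presheaf C Gob Gar \<and>
     (\<forall>T. table T \<longrightarrow>
        bij_betw (\<lambda>x. map (\<lambda>k. Gar (gi C T k) x) [0..<length (fst T)])
                 (Gob (gs C T)) (fiber_prod C Gob Gar T))"

text \<open>Composition v *^i_j u = G(nabla^i_j)(xi), xi the element of G(D_i amalg_(D_j) D_i)
corresponding to (v, u).\<close>

definition gcomp :: "('o, 'm) gext \<Rightarrow> 'm pregrp \<Rightarrow> ('o \<Rightarrow> 'x set) \<Rightarrow> ('m \<Rightarrow> 'x \<Rightarrow> 'x) \<Rightarrow>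
    nat \<Rightarrow> nat \<Rightarrow> 'x \<Rightarrow> 'x \<Rightarrow> 'x" where
  "gcomp C P Gob Gar i j v u = Gar (nab P i j)
     (THE \<xi>. \<xi> \<in> Gob (gs C (bin i j)) \<and> Gar (gi C (bin i j) 0) \<xi> = v \<and> Gar (gi C (bin i j) 1) \<xi> = u)"

definition sim_rel :: "('o, 'm) gext \<Rightarrow> ('o \<Rightarrow> 'x set) \<Rightarrow> ('m \<Rightarrow> 'x \<Rightarrow> 'x) \<Rightarrow> nat \<Rightarrow> ('x \<times> 'x) set" where
  "sim_rel C Gob Gar n = {(u, v). u \<in> Gob (Dg C n) \<and> v \<in> Gob (Dg C n) \<and>
      (\<exists>a \<in> Gob (Dg C (n + 1)). Gar (sg C (n + 1)) a = u \<and> Gar (tu C (n + 1)) a = v)}"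

definition Pi_obj :: "('o, 'm) gext \<Rightarrow> ('o \<Rightarrow> 'x set) \<Rightarrow> nat \<Rightarrow> 'x set" where
  "Pi_obj C Gob n = Gob (Dg C (n - 1))"

definition Pi_arr :: "('o, 'm) gext \<Rightarrow> ('o \<Rightarrow> 'x set) \<Rightarrow> ('m \<Rightarrow> 'x \<Rightarrow> 'x) \<Rightarrow> nat \<Rightarrow> 'x set set" where
  "Pi_arr C Gob Gar n = Gob (Dg C n) // sim_rel C Gob Gar n"

definition Pi_src :: "('o, 'm) gext \<Rightarrow> ('m \<Rightarrow> 'x \<Rightarrow> 'x) \<Rightarrow> nat \<Rightarrow> 'x set \<Rightarrow> 'x" where
  "Pi_src C Gar n X = the_elem (Gar (sg C n) ` X)"

definition Pi_tgt :: "('o, 'm) gext \<Rightarrow> ('m \<Rightarrow> 'x \<Rightarrow> 'x) \<Rightarrow> nat \<Rightarrow> 'x set \<Rightarrow> 'x" where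
  "Pi_tgt C Gar n X = the_elem (Gar (tu C n) ` X)"

definition Pi_comp :: "('o, 'm) gext \<Rightarrow> 'm pregrp \<Rightarrow> ('o \<Rightarrow> 'x set) \<Rightarrow> ('m \<Rightarrow> 'x \<Rightarrow> 'x) \<Rightarrow>
    nat \<Rightarrow> 'x set \<Rightarrow> 'x set \<Rightarrow> 'x set" where
  "Pi_comp C P Gob Gar n Y X = the_elem
     {sim_rel C Gob Gar n `` {gcomp C P Gob Gar n (n - 1) v u} | v u.
        v \<in> Y \<and> u \<in> X \<and> Gar (sg C n) v = Gar (tu C n) u}"

definition Pi_id :: "('o, 'm) gext \<Rightarrow> 'm pregrp \<Rightarrow> ('o \<Rightarrow> 'x set) \<Rightarrow> ('m \<Rightarrow> 'x \<Rightarrow> 'x) \<Rightarrow>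
    nat \<Rightarrow> 'x \<Rightarrow> 'x set" where
  "Pi_id C P Gob Gar n x = sim_rel C Gob Gar n `` {Gar (kap P (n - 1)) x}"

definition is_groupoid :: "'a set \<Rightarrow> 'b set \<Rightarrow> ('b \<Rightarrow> 'a) \<Rightarrow> ('b \<Rightarrow> 'a) \<Rightarrow>
    ('b \<Rightarrow> 'b \<Rightarrow> 'b) \<Rightarrow> ('a \<Rightarrow> 'b) \<Rightarrow> bool" where
  "is_groupoid Obj Arr src tgt cmp idn \<longleftrightarrow>
     (\<forall>f \<in> Arr. src f \<in> Obj \<and> tgt f \<in> Obj) \<and>
     (\<forall>x \<in> Obj. idn x \<in> Arr \<and> src (idn x) = x \<and> tgt (idn x) = x) \<and>
     (\<forall>f \<in> Arr. \<forall>g \<in> Arr. src g = tgt f \<longrightarrow>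
        cmp g f \<in> Arr \<and> src (cmp g f) = src f \<and> tgt (cmp g f) = tgt g) \<and>
     (\<forall>f \<in> Arr. \<forall>g \<in> Arr. \<forall>h \<in> Arr. src g = tgt f \<longrightarrow> src h = tgt g \<longrightarrow>
        cmp h (cmp g f) = cmp (cmp h g) f) \<and>
     (\<forall>f \<in> Arr. cmp f (idn (src f)) = f \<and> cmp (idn (tgt f)) f = f) \<and>
     (\<forall>f \<in> Arr. \<exists>g \<in> Arr. src g = tgt f \<and> tgt g = src f \<and>
        cmp g f = idn (src f) \<and> cmp f g = idn (tgt f))"

end

theory Submission
  imports Defs
begin

locale ps =
  fixes C :: "('o, 'm) gext" and P :: "'m pregrp"
    and Gob :: "'o \<Rightarrow> 'x set" and Gar :: "'m \<Rightarrow> 'x \<Rightarrow> 'x" and n :: nat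
  assumes ge: "globular_extension C"
    and ct: "contractible C"
    and pg: "pregroupoidal C P"
    and ig: "infty_groupoid C Gob Gar"
    and n1: "n \<ge> 1"
begin

lemma cat: "is_category C" using ge by (simp add: globular_extension_def)
lemma ug: "under_globe C" using ge by (simp add: globular_extension_def)
lemma psh: "presheaf C Gob Gar" using ig by (simp add: infty_groupoid_def)

lemma comp_hom: "f \<in> hom C a b \<Longrightarrow> g \<in> hom C b d \<Longrightarrow> Cmp C g f \<in> hom C a d"
  using cat unfolding is_category_def hom_def by auto

lemma assoc: "f \<in> hom C a b \<Longrightarrow> g \<in> hom C b d \<Longrightarrow> h \<in> hom C d e \<Longrightarrow>
    Cmp C h (Cmp C g f) = Cmp C (Cmp C h g) f"
  using cat unfolding is_category_def hom_def by auto

lemma idr: "f \<in> hom C a b \<Longrightarrow> Cmp C f (Idm C a) = f"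
  using cat unfolding is_category_def hom_def by auto
lemma idl: "f \<in> hom C a b \<Longrightarrow> Cmp C (Idm C b) f = f"
  using cat unfolding is_category_def hom_def by auto
lemma id_hom: "a \<in> Ob C \<Longrightarrow> Idm C a \<in> hom C a a"
  using cat unfolding is_category_def hom_def by auto

lemma G_mem: "f \<in> hom C a b \<Longrightarrow> x \<in> Gob b \<Longrightarrow> Gar f x \<in> Gob a"
  using psh unfolding presheaf_def hom_def by auto
lemma G_comp: "f \<in> hom C a b \<Longrightarrow> g \<in> hom C b d \<Longrightarrow> x \<in> Gob d \<Longrightarrow>
    Gar (Cmp C g f) x = Gar f (Gar g x)"
  using psh unfolding presheaf_def hom_def by auto
lemma G_id: "a \<in> Ob C \<Longrightarrow> x \<in> Gob a \<Longrightarrow> Gar (Idm C a) x = x"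
  using psh unfolding presheaf_def by auto

lemma D_ob: "Dg C k \<in> Ob C" using ug unfolding under_globe_def by auto
lemma sg_hom: "sg C (Suc k) \<in> hom C (Dg C k) (Dg C (Suc k))"
  using ug unfolding under_globe_def by (metis diff_Suc_1 le_add1 plus_1_eq_Suc)
lemma tu_hom: "tu C (Suc k) \<in> hom C (Dg C k) (Dg C (Suc k))"
  using ug unfolding under_globe_def by (metis diff_Suc_1 le_add1 plus_1_eq_Suc)
lemma glob_rels: "Cmp C (sg C (Suc (Suc k))) (sg C (Suc k)) = Cmp C (tu C (Suc (Suc k))) (sg C (Suc k)) \<and>
   Cmp C (sg C (Suc (Suc k))) (tu C (Suc k)) = Cmp C (tu C (Suc (Suc k))) (tu C (Suc k))"
proof -
  have h: "\<forall>m\<ge>1. Cmp C (sg C (m + 1)) (sg C m) = Cmp C (tu C (m + 1)) (sg C m) \<and>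
          Cmp C (sg C (m + 1)) (tu C m) = Cmp C (tu C (m + 1)) (tu C m)"
    using ug unfolding under_globe_def by blast
  show ?thesis using h[rule_format, of "Suc k"] by simp
qed
lemmas glob_s = glob_rels[THEN conjunct1]
lemmas glob_t = glob_rels[THEN conjunct2]

lemma sgit_self: "sgit C i i = Idm C (Dg C i)" by (cases i) auto
lemma tuit_self: "tuit C i i = Idm C (Dg C i)" by (cases i) auto
lemma sgit_Suc: "sgit C (Suc i) i = sg C (Suc i)" using idr[OF sg_hom] by (simp add: sgit_self)
lemma tuit_Suc: "tuit C (Suc i) i = tu C (Suc i)" using idr[OF tu_hom] by (simp add: tuit_self)
lemma sgit_SS: "sgit C (Suc (Suc i)) i = Cmp C (sg C (Suc (Suc i))) (sg C (Suc i))"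
  by (simp add: sgit_self idr[OF sg_hom])
lemma tuit_SS: "tuit C (Suc (Suc i)) i = Cmp C (tu C (Suc (Suc i))) (tu C (Suc i))"
  by (simp add: tuit_self idr[OF tu_hom])

lemma colim: "table T \<Longrightarrow> is_colimit C T (gs C T) (gi C T)"
  using ge by (cases T) (simp add: globular_extension_def)

lemma tab2: "j < i \<Longrightarrow> table (bin i j)" by (simp add: table_def)

lemma less2: "(k::nat) < Suc (Suc 0) \<longleftrightarrow> k = 0 \<or> k = 1" by auto

lemma bin_props:
  assumes "j < i"
  shows "gs C (bin i j) \<in> Ob C" "gi C (bin i j) 0 \<in> hom C (Dg C i) (gs C (bin i j))"
    "gi C (bin i j) 1 \<in> hom C (Dg C i) (gs C (bin i j))"
    "Cmp C (gi C (bin i j) 0) (sgit C i j) = Cmp C (gi C (bin i j) 1) (tuit C i j)"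
  using colim[OF tab2[OF assms]] unfolding is_colimit_def cocone_def Let_def by (auto simp: less2)

lemma bin_univ:
  assumes "j < i" "X \<in> Ob C" "a \<in> hom C (Dg C i) X" "b \<in> hom C (Dg C i) X"
    "Cmp C a (sgit C i j) = Cmp C b (tuit C i j)"
  shows "\<exists>m \<in> hom C (gs C (bin i j)) X. Cmp C m (gi C (bin i j) 0) = a \<and> Cmp C m (gi C (bin i j) 1) = b"
proof -
  let ?c = "\<lambda>k::nat. if k = 0 then a else b"
  have "cocone C (bin i j) X ?c" unfolding cocone_def Let_def fst_conv snd_conv
  proof (intro conjI allI impI)
    fix k assume "k < length [i, i]" then have "k = 0 \<or> k = 1" by auto
    then show "?c k \<in> hom C (Dg C ([i, i] ! k)) X" using assms(3,4) by auto
  next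
    fix k assume "k < length [j]" then have "k = 0" by auto
    then show "Cmp C (?c k) (sgit C ([i, i] ! k) ([j] ! k)) = Cmp C (?c (k + 1)) (tuit C ([i, i] ! (k + 1)) ([j] ! k))"
      using assms(5) by simp
  qed
  note coc = this
  have U: "\<forall>X\<in>Ob C. \<forall>c. cocone C (bin i j) X c \<longrightarrow>
        (\<exists>!h. h \<in> hom C (gs C (bin i j)) X \<and> (\<forall>k < length (fst (bin i j)). Cmp C h (gi C (bin i j) k) = c k))"
    using colim[OF tab2[OF assms(1)]] unfolding is_colimit_def by blast
  obtain h where h: "h \<in> hom C (gs C (bin i j)) X"
      "\<forall>k < length (fst (bin i j)). Cmp C h (gi C (bin i j) k) = ?c k"
    using U[rule_format, OF assms(2) coc] by blast
  have "Cmp C h (gi C (bin i j) 0) = a" using h(2)[rule_format, of 0] by simp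
  moreover have "Cmp C h (gi C (bin i j) 1) = b" using h(2)[rule_format, of 1] by simp
  ultimately show ?thesis using h(1) by blast
qed

lemma bij_T: "table T \<Longrightarrow> bij_betw (\<lambda>x. map (\<lambda>k. Gar (gi C T k) x) [0..<length (fst T)])
                 (Gob (gs C T)) (fiber_prod C Gob Gar T)"
  using ig unfolding infty_groupoid_def by blast

lemma gen_inj:
  assumes "table T" "\<xi> \<in> Gob (gs C T)" "\<xi>' \<in> Gob (gs C T)"
    "\<And>k. k < length (fst T) \<Longrightarrow> Gar (gi C T k) \<xi> = Gar (gi C T k) \<xi>'"
  shows "\<xi> = \<xi>'"
proof -
  have eq: "map (\<lambda>k. Gar (gi C T k) \<xi>) [0..<length (fst T)] = map (\<lambda>k. Gar (gi C T k) \<xi>') [0..<length (fst T)]"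
    using assms(4) by (intro map_cong) auto
  have inj: "inj_on (\<lambda>x. map (\<lambda>k. Gar (gi C T k) x) [0..<length (fst T)]) (Gob (gs C T))"
    using bij_T[OF assms(1)] by (simp add: bij_betw_def)
  show ?thesis using inj_onD[OF inj eq assms(2,3)] .
qed

lemma gen_ex:
  assumes "table T" "us \<in> fiber_prod C Gob Gar T"
  shows "\<exists>\<xi> \<in> Gob (gs C T). \<forall>k < length (fst T). Gar (gi C T k) \<xi> = us ! k"
proof -
  have img: "(\<lambda>x. map (\<lambda>k. Gar (gi C T k) x) [0..<length (fst T)]) ` Gob (gs C T) = fiber_prod C Gob Gar T"
    using bij_T[OF assms(1)] by (rule bij_betw_imp_surj_on)
  obtain \<xi> where x: "\<xi> \<in> Gob (gs C T)" and eq: "us = map (\<lambda>k. Gar (gi C T k) \<xi>) [0..<length (fst T)]"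
    using assms(2) unfolding img[symmetric] by (rule imageE)
  show ?thesis
  proof (rule bexI[OF _ x], intro allI impI)
    fix k assume k: "k < length (fst T)"
    show "Gar (gi C T k) \<xi> = us ! k" unfolding eq using k by (simp only: nth_map_upt) simp
  qed
qed

definition xi2 :: "nat \<Rightarrow> nat \<Rightarrow> 'x \<Rightarrow> 'x \<Rightarrow> 'x" where
  "xi2 i j v u = (THE \<xi>. \<xi> \<in> Gob (gs C (bin i j)) \<and> Gar (gi C (bin i j) 0) \<xi> = v \<and> Gar (gi C (bin i j) 1) \<xi> = u)"

lemma gcomp_xi2: "gcomp C P Gob Gar i j v u = Gar (nab P i j) (xi2 i j v u)"
  by (simp add: gcomp_def xi2_def)

lemma xi2_eq:
  assumes "j < i" "\<xi> \<in> Gob (gs C (bin i j))" "Gar (gi C (bin i j) 0) \<xi> = v" "Gar (gi C (bin i j) 1) \<xi> = u"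
  shows "xi2 i j v u = \<xi>"
  unfolding xi2_def
proof (rule the_equality)
  show "\<xi> \<in> Gob (gs C (bin i j)) \<and> Gar (gi C (bin i j) 0) \<xi> = v \<and> Gar (gi C (bin i j) 1) \<xi> = u"
    using assms by auto
  fix \<xi>' assume h: "\<xi>' \<in> Gob (gs C (bin i j)) \<and> Gar (gi C (bin i j) 0) \<xi>' = v \<and> Gar (gi C (bin i j) 1) \<xi>' = u"
  show "\<xi>' = \<xi>"
  proof (rule gen_inj[OF tab2[OF assms(1)]])
    show "\<xi>' \<in> Gob (gs C (bin i j))" using h by blast
    show "\<xi> \<in> Gob (gs C (bin i j))" using assms by blast
    fix k assume "k < length (fst (bin i j))"
    then have "k = 0 \<or> k = 1" by auto
    then show "Gar (gi C (bin i j) k) \<xi>' = Gar (gi C (bin i j) k) \<xi>" using h assms by auto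
  qed
qed

lemma xi2_props:
  assumes "j < i" "v \<in> Gob (Dg C i)" "u \<in> Gob (Dg C i)" "Gar (sgit C i j) v = Gar (tuit C i j) u"
  shows "xi2 i j v u \<in> Gob (gs C (bin i j))" "Gar (gi C (bin i j) 0) (xi2 i j v u) = v"
    "Gar (gi C (bin i j) 1) (xi2 i j v u) = u"
proof -
  have "[v, u] \<in> fiber_prod C Gob Gar (bin i j)"
    using assms unfolding fiber_prod_def Let_def by (simp add: less2)
  then obtain \<xi> where x: "\<xi> \<in> Gob (gs C (bin i j))"
     "\<forall>k<length (fst (bin i j)). Gar (gi C (bin i j) k) \<xi> = [v, u] ! k"
    using gen_ex[OF tab2[OF assms(1)]] by blast
  have a: "Gar (gi C (bin i j) 0) \<xi> = v" using x(2)[rule_format, of 0] by simp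
  have b: "Gar (gi C (bin i j) 1) \<xi> = u" using x(2)[rule_format, of 1] by simp
  have e: "xi2 i j v u = \<xi>" using xi2_eq[OF assms(1) x(1) a b] .
  show "xi2 i j v u \<in> Gob (gs C (bin i j))" "Gar (gi C (bin i j) 0) (xi2 i j v u) = v"
    "Gar (gi C (bin i j) 1) (xi2 i j v u) = u" using x(1) a b unfolding e by auto
qed

lemma G_out:
  assumes "j < i" "m \<in> hom C (gs C (bin i j)) X" "y \<in> Gob X"
  shows "Gar m y = xi2 i j (Gar (Cmp C m (gi C (bin i j) 0)) y) (Gar (Cmp C m (gi C (bin i j) 1)) y)"
proof (rule xi2_eq[symmetric])
  note b = bin_props[OF assms(1)]
  show "j < i" by fact
  show "Gar m y \<in> Gob (gs C (bin i j))" using G_mem[OF assms(2,3)] .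
  show "Gar (gi C (bin i j) 0) (Gar m y) = Gar (Cmp C m (gi C (bin i j) 0)) y"
    using G_comp[OF b(2) assms(2,3)] by simp
  show "Gar (gi C (bin i j) 1) (Gar m y) = Gar (Cmp C m (gi C (bin i j) 1)) y"
    using G_comp[OF b(3) assms(2,3)] by simp
qed

lemma sgit_hom: "j \<le> i \<Longrightarrow> sgit C i j \<in> hom C (Dg C j) (Dg C i)"
proof (induction i)
  case 0 then show ?case by (simp add: id_hom D_ob)
next
  case (Suc i)
  show ?case
  proof (cases "Suc i \<le> j")
    case True then have "j = Suc i" using Suc.prems by simp
    then show ?thesis by (simp add: id_hom D_ob)
  next
    case False then have "j \<le> i" by simp
    then show ?thesis using Suc.IH False by (simp add: comp_hom[OF _ sg_hom])
  qed
qed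

lemma tuit_hom: "j \<le> i \<Longrightarrow> tuit C i j \<in> hom C (Dg C j) (Dg C i)"
proof (induction i)
  case 0 then show ?case by (simp add: id_hom D_ob)
next
  case (Suc i)
  show ?case
  proof (cases "Suc i \<le> j")
    case True then have "j = Suc i" using Suc.prems by simp
    then show ?thesis by (simp add: id_hom D_ob)
  next
    case False then have "j \<le> i" by simp
    then show ?thesis using Suc.IH False by (simp add: comp_hom[OF _ tu_hom])
  qed
qed

lemma bin_uniq:
  assumes "j < i" "X \<in> Ob C" "m \<in> hom C (gs C (bin i j)) X" "m' \<in> hom C (gs C (bin i j)) X"
    "Cmp C m (gi C (bin i j) 0) = Cmp C m' (gi C (bin i j) 0)"
    "Cmp C m (gi C (bin i j) 1) = Cmp C m' (gi C (bin i j) 1)"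
  shows "m = m'"
proof -
  note b = bin_props[OF assms(1)]
  let ?c = "\<lambda>k. Cmp C m (gi C (bin i j) k)"
  have coc: "cocone C (bin i j) X ?c" unfolding cocone_def Let_def fst_conv snd_conv
  proof (intro conjI allI impI)
    fix k assume "k < length [i, i]" then have "k = 0 \<or> k = 1" by auto
    then show "?c k \<in> hom C (Dg C ([i, i] ! k)) X" using comp_hom[OF b(2) assms(3)] comp_hom[OF b(3) assms(3)] by auto
  next
    fix k assume "k < length [j]" then have k: "k = 0" by auto
    have "Cmp C (Cmp C m (gi C (bin i j) 0)) (sgit C i j) = Cmp C m (Cmp C (gi C (bin i j) 0) (sgit C i j))"
      using assoc[OF sgit_hom b(2) assms(3)] assms(1) by simp
    also have "\<dots> = Cmp C m (Cmp C (gi C (bin i j) 1) (tuit C i j))" using b(4) by simp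
    also have "\<dots> = Cmp C (Cmp C m (gi C (bin i j) 1)) (tuit C i j)"
      using assoc[OF tuit_hom b(3) assms(3)] assms(1) by simp
    finally show "Cmp C (?c k) (sgit C ([i, i] ! k) ([j] ! k)) = Cmp C (?c (k + 1)) (tuit C ([i, i] ! (k + 1)) ([j] ! k))"
      using k by simp
  qed
  have U: "\<forall>X\<in>Ob C. \<forall>c. cocone C (bin i j) X c \<longrightarrow>
        (\<exists>!h. h \<in> hom C (gs C (bin i j)) X \<and> (\<forall>k < length (fst (bin i j)). Cmp C h (gi C (bin i j) k) = c k))"
    using colim[OF tab2[OF assms(1)]] unfolding is_colimit_def by blast
  have E: "\<exists>!h. h \<in> hom C (gs C (bin i j)) X \<and> (\<forall>k < length (fst (bin i j)). Cmp C h (gi C (bin i j) k) = ?c k)"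
    using U[rule_format, OF assms(2) coc] .
  have h1: "m \<in> hom C (gs C (bin i j)) X \<and> (\<forall>k < length (fst (bin i j)). Cmp C m (gi C (bin i j) k) = ?c k)"
    using assms(3) by simp
  have h2: "m' \<in> hom C (gs C (bin i j)) X \<and> (\<forall>k < length (fst (bin i j)). Cmp C m' (gi C (bin i j) k) = ?c k)"
  proof (intro conjI allI impI)
    show "m' \<in> hom C (gs C (bin i j)) X" by fact
    fix k assume "k < length (fst (bin i j))" then have "k = 0 \<or> k = 1" by auto
    then show "Cmp C m' (gi C (bin i j) k) = ?c k" using assms(5,6) by auto
  qed
  show ?thesis using E h1 h2 by blast
qed

lemma nS: "Suc (n - 1) = n" using n1 by simp

lemma sgn_hom: "sg C n \<in> hom C (Dg C (n - 1)) (Dg C n)" using sg_hom[of "n - 1", unfolded nS] .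
lemma tun_hom: "tu C n \<in> hom C (Dg C (n - 1)) (Dg C n)" using tu_hom[of "n - 1", unfolded nS] .
lemma sgit_n: "sgit C n (n - 1) = sg C n" using sgit_Suc[of "n - 1", unfolded nS] .
lemma tuit_n: "tuit C n (n - 1) = tu C n" using tuit_Suc[of "n - 1", unfolded nS] .
lemma sgit_Sn: "sgit C (Suc n) (n - 1) = Cmp C (sg C (Suc n)) (sg C n)" using sgit_SS[of "n - 1", unfolded nS] .
lemma tuit_Sn: "tuit C (Suc n) (n - 1) = Cmp C (tu C (Suc n)) (tu C n)" using tuit_SS[of "n - 1", unfolded nS] .
lemma glob_sn: "Cmp C (sg C (Suc n)) (sg C n) = Cmp C (tu C (Suc n)) (sg C n)" using glob_s[of "n - 1", unfolded nS] .
lemma glob_tn: "Cmp C (sg C (Suc n)) (tu C n) = Cmp C (tu C (Suc n)) (tu C n)" using glob_t[of "n - 1", unfolded nS] .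

lemma nab_hom: "j < i \<Longrightarrow> nab P i j \<in> hom C (Dg C i) (gs C (bin i j))"
  using pg unfolding pregroupoidal_def by blast
lemma ww_hom: "j < i \<Longrightarrow> ww P i j \<in> hom C (Dg C i) (Dg C i)"
  using pg unfolding pregroupoidal_def by blast
lemma kap_hom: "kap P i \<in> hom C (Dg C (Suc i)) (Dg C i)"
  using pg unfolding pregroupoidal_def by simp
lemma nab_st: "i \<ge> 1 \<Longrightarrow> Cmp C (nab P i (i - 1)) (sg C i) = Cmp C (gi C (bin i (i - 1)) 1) (sg C i) \<and>
        Cmp C (nab P i (i - 1)) (tu C i) = Cmp C (gi C (bin i (i - 1)) 0) (tu C i)"
  using pg unfolding pregroupoidal_def by blast
lemma nab_st2: "j + 1 < i \<Longrightarrow> Cmp C (nab P i j) (sg C i) = Cmp C (amalg_map C (sg C) i j) (nab P (i - 1) j) \<and>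
        Cmp C (nab P i j) (tu C i) = Cmp C (amalg_map C (tu C) i j) (nab P (i - 1) j)"
  using pg unfolding pregroupoidal_def by blast
lemma kap_st: "Cmp C (kap P i) (sg C (Suc i)) = Idm C (Dg C i) \<and> Cmp C (kap P i) (tu C (Suc i)) = Idm C (Dg C i)"
  using pg unfolding pregroupoidal_def by simp
lemma ww_st: "i \<ge> 1 \<Longrightarrow> Cmp C (ww P i (i - 1)) (sg C i) = tu C i \<and> Cmp C (ww P i (i - 1)) (tu C i) = sg C i"
  using pg unfolding pregroupoidal_def by blast


lemma amalg:
  assumes M: "M (Suc n) \<in> hom C (Dg C n) (Dg C (Suc n))"
    "Cmp C (M (Suc n)) (sg C n) = Cmp C (sg C (Suc n)) (sg C n)"
    "Cmp C (M (Suc n)) (tu C n) = Cmp C (tu C (Suc n)) (tu C n)"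
  shows "amalg_map C M (Suc n) (n - 1) \<in> hom C (gs C (bin n (n - 1))) (gs C (bin (Suc n) (n - 1))) \<and>
    Cmp C (amalg_map C M (Suc n) (n - 1)) (gi C (bin n (n - 1)) 0) = Cmp C (gi C (bin (Suc n) (n - 1)) 0) (M (Suc n)) \<and>
    Cmp C (amalg_map C M (Suc n) (n - 1)) (gi C (bin n (n - 1)) 1) = Cmp C (gi C (bin (Suc n) (n - 1)) 1) (M (Suc n))"
proof -
  have j1: "n - 1 < Suc n" by simp
  have j2: "n - 1 < n" using n1 by simp
  note B = bin_props[OF j1]
  note A = bin_props[OF j2]
  let ?a = "Cmp C (gi C (bin (Suc n) (n - 1)) 0) (M (Suc n))"
  let ?b = "Cmp C (gi C (bin (Suc n) (n - 1)) 1) (M (Suc n))"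
  have ah: "?a \<in> hom C (Dg C n) (gs C (bin (Suc n) (n - 1)))" using comp_hom[OF M(1) B(2)] .
  have bh: "?b \<in> hom C (Dg C n) (gs C (bin (Suc n) (n - 1)))" using comp_hom[OF M(1) B(3)] .
  have "Cmp C ?a (sgit C n (n - 1)) = Cmp C (gi C (bin (Suc n) (n - 1)) 0) (Cmp C (M (Suc n)) (sg C n))"
    unfolding sgit_n using assoc[OF sgn_hom M(1) B(2)] by simp
  also have "\<dots> = Cmp C (gi C (bin (Suc n) (n - 1)) 0) (sgit C (Suc n) (n - 1))" unfolding sgit_Sn M(2) ..
  also have "\<dots> = Cmp C (gi C (bin (Suc n) (n - 1)) 1) (tuit C (Suc n) (n - 1))" using B(4) .
  also have "\<dots> = Cmp C (gi C (bin (Suc n) (n - 1)) 1) (Cmp C (M (Suc n)) (tu C n))" unfolding tuit_Sn M(3) ..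
  also have "\<dots> = Cmp C ?b (tuit C n (n - 1))"
    unfolding tuit_n using assoc[OF tun_hom M(1) B(3)] by simp
  finally have cond: "Cmp C ?a (sgit C n (n - 1)) = Cmp C ?b (tuit C n (n - 1))" .
  obtain h where h: "h \<in> hom C (gs C (bin n (n - 1))) (gs C (bin (Suc n) (n - 1)))"
     "Cmp C h (gi C (bin n (n - 1)) 0) = ?a" "Cmp C h (gi C (bin n (n - 1)) 1) = ?b"
    using bin_univ[OF j2 B(1) ah bh cond] by blast
  have "amalg_map C M (Suc n) (n - 1) = h"
    unfolding amalg_map_def diff_Suc_1
  proof (rule the_equality)
    show "h \<in> hom C (gs C (bin n (n - 1))) (gs C (bin (Suc n) (n - 1))) \<and>
      Cmp C h (gi C (bin n (n - 1)) 0) = ?a \<and> Cmp C h (gi C (bin n (n - 1)) 1) = ?b" using h by blast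
    fix h' assume "h' \<in> hom C (gs C (bin n (n - 1))) (gs C (bin (Suc n) (n - 1))) \<and>
      Cmp C h' (gi C (bin n (n - 1)) 0) = ?a \<and> Cmp C h' (gi C (bin n (n - 1)) 1) = ?b"
    then show "h' = h" using bin_uniq[OF j2 B(1), of h' h] h by simp
  qed
  then show ?thesis using h by simp
qed

lemma amalg_s: "amalg_map C (sg C) (Suc n) (n - 1) \<in> hom C (gs C (bin n (n - 1))) (gs C (bin (Suc n) (n - 1))) \<and>
    Cmp C (amalg_map C (sg C) (Suc n) (n - 1)) (gi C (bin n (n - 1)) 0) = Cmp C (gi C (bin (Suc n) (n - 1)) 0) (sg C (Suc n)) \<and>
    Cmp C (amalg_map C (sg C) (Suc n) (n - 1)) (gi C (bin n (n - 1)) 1) = Cmp C (gi C (bin (Suc n) (n - 1)) 1) (sg C (Suc n))"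
  by (rule amalg) (auto simp: sg_hom glob_tn)

lemma amalg_t: "amalg_map C (tu C) (Suc n) (n - 1) \<in> hom C (gs C (bin n (n - 1))) (gs C (bin (Suc n) (n - 1))) \<and>
    Cmp C (amalg_map C (tu C) (Suc n) (n - 1)) (gi C (bin n (n - 1)) 0) = Cmp C (gi C (bin (Suc n) (n - 1)) 0) (tu C (Suc n)) \<and>
    Cmp C (amalg_map C (tu C) (Suc n) (n - 1)) (gi C (bin n (n - 1)) 1) = Cmp C (gi C (bin (Suc n) (n - 1)) 1) (tu C (Suc n))"
  by (rule amalg) (auto simp: tu_hom glob_sn)


abbreviation "R \<equiv> sim_rel C Gob Gar n"
abbreviation cmpn :: "'x \<Rightarrow> 'x \<Rightarrow> 'x" where "cmpn v u \<equiv> gcomp C P Gob Gar n (n - 1) v u"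

lemma j2: "n - 1 < n" using n1 by simp

lemma R_iff: "(u, v) \<in> R \<longleftrightarrow> u \<in> Gob (Dg C n) \<and> v \<in> Gob (Dg C n) \<and>
   (\<exists>a \<in> Gob (Dg C (Suc n)). Gar (sg C (Suc n)) a = u \<and> Gar (tu C (Suc n)) a = v)"
  unfolding sim_rel_def by simp

lemma comp_props:
  assumes "v \<in> Gob (Dg C n)" "u \<in> Gob (Dg C n)" "Gar (sg C n) v = Gar (tu C n) u"
  shows "cmpn v u \<in> Gob (Dg C n)" "Gar (sg C n) (cmpn v u) = Gar (sg C n) u"
    "Gar (tu C n) (cmpn v u) = Gar (tu C n) v"
proof -
  have c: "Gar (sgit C n (n - 1)) v = Gar (tuit C n (n - 1)) u" unfolding sgit_n tuit_n by fact
  note X = xi2_props[OF j2 assms(1,2) c]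
  note nh = nab_hom[OF j2]
  note B = bin_props[OF j2]
  note st = nab_st[OF n1]
  show "cmpn v u \<in> Gob (Dg C n)" unfolding gcomp_xi2 using G_mem[OF nh X(1)] .
  have "Gar (sg C n) (cmpn v u) = Gar (Cmp C (nab P n (n - 1)) (sg C n)) (xi2 n (n - 1) v u)"
    unfolding gcomp_xi2 using G_comp[OF sgn_hom nh X(1)] by simp
  also have "\<dots> = Gar (Cmp C (gi C (bin n (n - 1)) 1) (sg C n)) (xi2 n (n - 1) v u)" using st by simp
  also have "\<dots> = Gar (sg C n) u" using G_comp[OF sgn_hom B(3) X(1)] X(3) by simp
  finally show "Gar (sg C n) (cmpn v u) = Gar (sg C n) u" .
  have "Gar (tu C n) (cmpn v u) = Gar (Cmp C (nab P n (n - 1)) (tu C n)) (xi2 n (n - 1) v u)"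
    unfolding gcomp_xi2 using G_comp[OF tun_hom nh X(1)] by simp
  also have "\<dots> = Gar (Cmp C (gi C (bin n (n - 1)) 0) (tu C n)) (xi2 n (n - 1) v u)" using st by simp
  also have "\<dots> = Gar (tu C n) v" using G_comp[OF tun_hom B(2) X(1)] X(2) by simp
  finally show "Gar (tu C n) (cmpn v u) = Gar (tu C n) v" .
qed

lemma comp_map:
  assumes "m \<in> hom C (gs C (bin n (n - 1))) X" "y \<in> Gob X"
  shows "cmpn (Gar (Cmp C m (gi C (bin n (n - 1)) 0)) y) (Gar (Cmp C m (gi C (bin n (n - 1)) 1)) y)
       = Gar (Cmp C m (nab P n (n - 1))) y"
  unfolding gcomp_xi2 using G_comp[OF nab_hom[OF j2] assms] G_out[OF j2 assms] by simp

lemma R_refl: "u \<in> Gob (Dg C n) \<Longrightarrow> (u, u) \<in> R"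
  unfolding R_iff
proof (intro conjI bexI)
  assume u: "u \<in> Gob (Dg C n)"
  show "Gar (kap P n) u \<in> Gob (Dg C (Suc n))" using G_mem[OF kap_hom u] .
  show "Gar (sg C (Suc n)) (Gar (kap P n) u) = u"
    using G_comp[OF sg_hom kap_hom u, symmetric] kap_st G_id[OF D_ob u] by simp
  show "Gar (tu C (Suc n)) (Gar (kap P n) u) = u"
    using G_comp[OF tu_hom kap_hom u, symmetric] kap_st G_id[OF D_ob u] by simp
qed (auto)

lemma R_sym: "(u, v) \<in> R \<Longrightarrow> (v, u) \<in> R"
  unfolding R_iff
proof (elim conjE bexE, intro conjI bexI)
  fix a assume a: "a \<in> Gob (Dg C (Suc n))" "Gar (sg C (Suc n)) a = u" "Gar (tu C (Suc n)) a = v"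
  have wh: "ww P (Suc n) n \<in> hom C (Dg C (Suc n)) (Dg C (Suc n))" using ww_hom by simp
  have st: "Cmp C (ww P (Suc n) n) (sg C (Suc n)) = tu C (Suc n) \<and> Cmp C (ww P (Suc n) n) (tu C (Suc n)) = sg C (Suc n)"
    using ww_st[of "Suc n"] by simp
  show "Gar (ww P (Suc n) n) a \<in> Gob (Dg C (Suc n))" using G_mem[OF wh a(1)] .
  show "Gar (sg C (Suc n)) (Gar (ww P (Suc n) n) a) = v"
    using G_comp[OF sg_hom wh a(1), symmetric] st a by simp
  show "Gar (tu C (Suc n)) (Gar (ww P (Suc n) n) a) = u"
    using G_comp[OF tu_hom wh a(1), symmetric] st a by simp
qed

lemma R_trans: "(u, v) \<in> R \<Longrightarrow> (v, w) \<in> R \<Longrightarrow> (u, w) \<in> R"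
  unfolding R_iff
proof (elim conjE bexE, intro conjI)
  fix a b assume a: "a \<in> Gob (Dg C (Suc n))" "Gar (sg C (Suc n)) a = u" "Gar (tu C (Suc n)) a = v"
    and b: "b \<in> Gob (Dg C (Suc n))" "Gar (sg C (Suc n)) b = v" "Gar (tu C (Suc n)) b = w"
    and "u \<in> Gob (Dg C n)" "w \<in> Gob (Dg C n)"
  then show "u \<in> Gob (Dg C n)" "w \<in> Gob (Dg C n)" by auto
  have jj: "n < Suc n" by simp
  have c: "Gar (sgit C (Suc n) n) b = Gar (tuit C (Suc n) n) a" unfolding sgit_Suc tuit_Suc using a b by simp
  note X = xi2_props[OF jj b(1) a(1) c]
  note nh = nab_hom[OF jj]
  note B = bin_props[OF jj]
  have st: "Cmp C (nab P (Suc n) n) (sg C (Suc n)) = Cmp C (gi C (bin (Suc n) n) 1) (sg C (Suc n)) \<and>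
        Cmp C (nab P (Suc n) n) (tu C (Suc n)) = Cmp C (gi C (bin (Suc n) n) 0) (tu C (Suc n))"
    using nab_st[of "Suc n"] by simp
  let ?e = "Gar (nab P (Suc n) n) (xi2 (Suc n) n b a)"
  show "\<exists>e \<in> Gob (Dg C (Suc n)). Gar (sg C (Suc n)) e = u \<and> Gar (tu C (Suc n)) e = w"
  proof (intro bexI conjI)
    show "?e \<in> Gob (Dg C (Suc n))" using G_mem[OF nh X(1)] .
    have "Gar (sg C (Suc n)) ?e = Gar (Cmp C (gi C (bin (Suc n) n) 1) (sg C (Suc n))) (xi2 (Suc n) n b a)"
      using G_comp[OF sg_hom nh X(1), symmetric] st by simp
    then show "Gar (sg C (Suc n)) ?e = u" using G_comp[OF sg_hom B(3) X(1)] X(3) a by simp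
    have "Gar (tu C (Suc n)) ?e = Gar (Cmp C (gi C (bin (Suc n) n) 0) (tu C (Suc n))) (xi2 (Suc n) n b a)"
      using G_comp[OF tu_hom nh X(1), symmetric] st by simp
    then show "Gar (tu C (Suc n)) ?e = w" using G_comp[OF tu_hom B(2) X(1)] X(2) b by simp
  qed
qed

lemma R_equiv: "equiv (Gob (Dg C n)) R"
proof (rule equivI)
  show "R \<subseteq> Gob (Dg C n) \<times> Gob (Dg C n)" using R_iff by auto
  show "refl_on (Gob (Dg C n)) R" using R_refl by (auto simp: refl_on_def)
  show "sym R" using R_sym by (auto intro: symI)
  show "trans R" using R_trans by (auto intro: transI)
qed

lemma R_st: "(u, v) \<in> R \<Longrightarrow> Gar (sg C n) u = Gar (sg C n) v \<and> Gar (tu C n) u = Gar (tu C n) v"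
  unfolding R_iff
proof (elim conjE bexE)
  fix a assume a: "a \<in> Gob (Dg C (Suc n))" "Gar (sg C (Suc n)) a = u" "Gar (tu C (Suc n)) a = v"
  have "Gar (sg C n) u = Gar (Cmp C (sg C (Suc n)) (sg C n)) a" using G_comp[OF sgn_hom sg_hom a(1)] a by simp
  also have "\<dots> = Gar (sg C n) v" unfolding glob_sn using G_comp[OF sgn_hom tu_hom a(1)] a by simp
  finally have 1: "Gar (sg C n) u = Gar (sg C n) v" .
  have "Gar (tu C n) u = Gar (Cmp C (sg C (Suc n)) (tu C n)) a" using G_comp[OF tun_hom sg_hom a(1)] a by simp
  also have "\<dots> = Gar (tu C n) v" unfolding glob_tn using G_comp[OF tun_hom tu_hom a(1)] a by simp
  finally show ?thesis using 1 by simp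
qed


lemma R_compat:
  assumes vv: "(v, v') \<in> R" and uu: "(u, u') \<in> R" and c0: "Gar (sg C n) v = Gar (tu C n) u"
  shows "(cmpn v u, cmpn v' u') \<in> R"
proof -
  obtain b where b: "b \<in> Gob (Dg C (Suc n))" "Gar (sg C (Suc n)) b = v" "Gar (tu C (Suc n)) b = v'"
    and v: "v \<in> Gob (Dg C n)" "v' \<in> Gob (Dg C n)" using vv unfolding R_iff by blast
  obtain a where a: "a \<in> Gob (Dg C (Suc n))" "Gar (sg C (Suc n)) a = u" "Gar (tu C (Suc n)) a = u'"
    and u: "u \<in> Gob (Dg C n)" "u' \<in> Gob (Dg C n)" using uu unfolding R_iff by blast
  have c1: "Gar (sg C n) v' = Gar (tu C n) u'" using R_st[OF vv] R_st[OF uu] c0 by simp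
  have jS: "n - 1 < Suc n" by simp
  have c: "Gar (sgit C (Suc n) (n - 1)) b = Gar (tuit C (Suc n) (n - 1)) a"
    unfolding sgit_Sn tuit_Sn using G_comp[OF sgn_hom sg_hom b(1)] G_comp[OF tun_hom tu_hom a(1)] b a c0 R_st[OF uu] by simp
  note X = xi2_props[OF jS b(1) a(1) c]
  let ?xi = "xi2 (Suc n) (n - 1) b a"
  note nh = nab_hom[OF jS]
  note B = bin_props[OF jS]
  have st2: "Cmp C (nab P (Suc n) (n - 1)) (sg C (Suc n)) = Cmp C (amalg_map C (sg C) (Suc n) (n - 1)) (nab P n (n - 1)) \<and>
        Cmp C (nab P (Suc n) (n - 1)) (tu C (Suc n)) = Cmp C (amalg_map C (tu C) (Suc n) (n - 1)) (nab P n (n - 1))"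
    using nab_st2[of "n - 1" "Suc n"] n1 by simp
  let ?e = "Gar (nab P (Suc n) (n - 1)) ?xi"
  have eh: "?e \<in> Gob (Dg C (Suc n))" using G_mem[OF nh X(1)] .
  note AS = amalg_s
  note AT = amalg_t
  have "Gar (sg C (Suc n)) ?e = Gar (Cmp C (amalg_map C (sg C) (Suc n) (n - 1)) (nab P n (n - 1))) ?xi"
    using G_comp[OF sg_hom nh X(1), symmetric] st2 by simp
  also have "\<dots> = Gar (nab P n (n - 1)) (Gar (amalg_map C (sg C) (Suc n) (n - 1)) ?xi)"
    using G_comp[OF nab_hom[OF j2] _ X(1)] AS by blast
  also have "Gar (amalg_map C (sg C) (Suc n) (n - 1)) ?xi = xi2 n (n - 1) v u"
  proof -
    have "Gar (amalg_map C (sg C) (Suc n) (n - 1)) ?xi =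
       xi2 n (n - 1) (Gar (Cmp C (gi C (bin (Suc n) (n - 1)) 0) (sg C (Suc n))) ?xi)
                     (Gar (Cmp C (gi C (bin (Suc n) (n - 1)) 1) (sg C (Suc n))) ?xi)"
      using G_out[OF j2 _ X(1)] AS by metis
    also have "\<dots> = xi2 n (n - 1) v u"
      using G_comp[OF sg_hom B(2) X(1)] G_comp[OF sg_hom B(3) X(1)] X(2,3) b a by simp
    finally show ?thesis .
  qed
  finally have s: "Gar (sg C (Suc n)) ?e = cmpn v u" unfolding gcomp_xi2 .
  have "Gar (tu C (Suc n)) ?e = Gar (Cmp C (amalg_map C (tu C) (Suc n) (n - 1)) (nab P n (n - 1))) ?xi"
    using G_comp[OF tu_hom nh X(1), symmetric] st2 by simp
  also have "\<dots> = Gar (nab P n (n - 1)) (Gar (amalg_map C (tu C) (Suc n) (n - 1)) ?xi)"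
    using G_comp[OF nab_hom[OF j2] _ X(1)] AT by blast
  also have "Gar (amalg_map C (tu C) (Suc n) (n - 1)) ?xi = xi2 n (n - 1) v' u'"
  proof -
    have "Gar (amalg_map C (tu C) (Suc n) (n - 1)) ?xi =
       xi2 n (n - 1) (Gar (Cmp C (gi C (bin (Suc n) (n - 1)) 0) (tu C (Suc n))) ?xi)
                     (Gar (Cmp C (gi C (bin (Suc n) (n - 1)) 1) (tu C (Suc n))) ?xi)"
      using G_out[OF j2 _ X(1)] AT by metis
    also have "\<dots> = xi2 n (n - 1) v' u'"
      using G_comp[OF tu_hom B(2) X(1)] G_comp[OF tu_hom B(3) X(1)] X(2,3) b a by simp
    finally show ?thesis .
  qed
  finally have t: "Gar (tu C (Suc n)) ?e = cmpn v' u'" unfolding gcomp_xi2 .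
  show ?thesis unfolding R_iff using comp_props(1)[OF v(1) u(1) c0] comp_props(1)[OF v(2) u(2) c1] eh s t by blast
qed

lemma lift_gen:
  assumes "table T" "table_dim T \<le> Suc n" "f \<in> hom C (Dg C n) (gs C T)" "g \<in> hom C (Dg C n) (gs C T)"
    "Cmp C f (sg C n) = Cmp C g (sg C n)" "Cmp C f (tu C n) = Cmp C g (tu C n)" "\<xi> \<in> Gob (gs C T)"
  shows "(Gar f \<xi>, Gar g \<xi>) \<in> R"
proof -
  have "glob_parallel C n f g" unfolding glob_parallel_def using assms(5,6) by blast
  then obtain h where h: "h \<in> hom C (Dg C (Suc n)) (gs C T)" "Cmp C h (sg C (Suc n)) = f" "Cmp C h (tu C (Suc n)) = g"
    using ct assms(1-4) unfolding contractible_def by fastforce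
  show ?thesis unfolding R_iff
  proof (intro conjI bexI)
    show "Gar f \<xi> \<in> Gob (Dg C n)" using G_mem[OF assms(3,7)] .
    show "Gar g \<xi> \<in> Gob (Dg C n)" using G_mem[OF assms(4,7)] .
    show "Gar h \<xi> \<in> Gob (Dg C (Suc n))" using G_mem[OF h(1) assms(7)] .
    show "Gar (sg C (Suc n)) (Gar h \<xi>) = Gar f \<xi>" using G_comp[OF sg_hom h(1) assms(7)] h(2) by simp
    show "Gar (tu C (Suc n)) (Gar h \<xi>) = Gar g \<xi>" using G_comp[OF tu_hom h(1) assms(7)] h(3) by simp
  qed
qed


abbreviation "T1 \<equiv> ([n], [] :: nat list)"

lemma endo_lift:
  assumes a: "a \<in> hom C (Dg C n) (Dg C n)" and b: "b \<in> hom C (Dg C n) (Dg C n)"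
    and ps: "Cmp C a (sg C n) = Cmp C b (sg C n)" and pt: "Cmp C a (tu C n) = Cmp C b (tu C n)"
    and u: "u \<in> Gob (Dg C n)"
  shows "(Gar a u, Gar b u) \<in> R"
proof -
  have tab: "table T1" unfolding table_def by simp
  have dim: "table_dim T1 \<le> Suc n" unfolding table_dim_def by simp
  have col: "is_colimit C T1 (gs C T1) (gi C T1)" using colim[OF tab] .
  have coc: "cocone C T1 (gs C T1) (gi C T1)" using col unfolding is_colimit_def by blast
  have U: "\<forall>X\<in>Ob C. \<forall>c. cocone C T1 X c \<longrightarrow>
        (\<exists>!h. h \<in> hom C (gs C T1) X \<and> (\<forall>k < length (fst T1). Cmp C h (gi C T1 k) = c k))"
    using col unfolding is_colimit_def by blast
  have "\<forall>k < length [n]. gi C T1 k \<in> hom C (Dg C ([n] ! k)) (gs C T1)"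
    using coc unfolding cocone_def Let_def fst_conv snd_conv by blast
  then have ih: "gi C T1 0 \<in> hom C (Dg C n) (gs C T1)" by simp
  have cc: "cocone C T1 (Dg C n) (\<lambda>k. Idm C (Dg C n))" unfolding cocone_def Let_def fst_conv snd_conv
  proof (intro conjI allI impI)
    fix k assume "k < length [n]" then have "k = 0" by simp
    then show "Idm C (Dg C n) \<in> hom C (Dg C ([n] ! k)) (Dg C n)" using id_hom[OF D_ob] by simp
  next
    fix k assume "k < length ([] :: nat list)" then show "Cmp C (Idm C (Dg C n)) (sgit C ([n] ! k) ([] ! k)) =
       Cmp C (Idm C (Dg C n)) (tuit C ([n] ! (k + 1)) ([] ! k))" by simp
  qed
  obtain r where r: "r \<in> hom C (gs C T1) (Dg C n)" "\<forall>k < length (fst T1). Cmp C r (gi C T1 k) = Idm C (Dg C n)"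
    using U[rule_format, OF D_ob cc] by blast
  have ri: "Cmp C r (gi C T1 0) = Idm C (Dg C n)" using r(2) by simp
  let ?z = "Gar r u"
  have xi: "?z \<in> Gob (gs C T1)" using G_mem[OF r(1) u] .
  have fh: "Cmp C (gi C T1 0) a \<in> hom C (Dg C n) (gs C T1)" using comp_hom[OF a ih] .
  have gh: "Cmp C (gi C T1 0) b \<in> hom C (Dg C n) (gs C T1)" using comp_hom[OF b ih] .
  have p1: "Cmp C (Cmp C (gi C T1 0) a) (sg C n) = Cmp C (Cmp C (gi C T1 0) b) (sg C n)"
    using assoc[OF sgn_hom a ih] assoc[OF sgn_hom b ih] ps by simp
  have p2: "Cmp C (Cmp C (gi C T1 0) a) (tu C n) = Cmp C (Cmp C (gi C T1 0) b) (tu C n)"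
    using assoc[OF tun_hom a ih] assoc[OF tun_hom b ih] pt by simp
  have L: "(Gar (Cmp C (gi C T1 0) a) ?z, Gar (Cmp C (gi C T1 0) b) ?z) \<in> R"
    using lift_gen[OF tab dim fh gh p1 p2 xi] .
  have bk: "Gar (gi C T1 0) ?z = u" using G_comp[OF ih r(1) u, symmetric] ri G_id[OF D_ob u] by simp
  have e1: "Gar (Cmp C (gi C T1 0) a) ?z = Gar a u" using G_comp[OF a ih xi] bk by simp
  have e2: "Gar (Cmp C (gi C T1 0) b) ?z = Gar b u" using G_comp[OF b ih xi] bk by simp
  show ?thesis using L e1 e2 by simp
qed


lemma nab_through:
  assumes m: "m \<in> hom C (gs C (bin n (n - 1))) X"
  shows "Cmp C (Cmp C m (nab P n (n - 1))) (sg C n) = Cmp C (Cmp C m (gi C (bin n (n - 1)) 1)) (sg C n)"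
    "Cmp C (Cmp C m (nab P n (n - 1))) (tu C n) = Cmp C (Cmp C m (gi C (bin n (n - 1)) 0)) (tu C n)"
proof -
  note nh = nab_hom[OF j2]
  note B = bin_props[OF j2]
  note st = nab_st[OF n1]
  show "Cmp C (Cmp C m (nab P n (n - 1))) (sg C n) = Cmp C (Cmp C m (gi C (bin n (n - 1)) 1)) (sg C n)"
    using assoc[OF sgn_hom nh m] assoc[OF sgn_hom B(3) m] st by simp
  show "Cmp C (Cmp C m (nab P n (n - 1))) (tu C n) = Cmp C (Cmp C m (gi C (bin n (n - 1)) 0)) (tu C n)"
    using assoc[OF tun_hom nh m] assoc[OF tun_hom B(2) m] st by simp
qed

lemma comp_lift:
  assumes a: "a \<in> hom C (Dg C n) (Dg C n)" and b: "b \<in> hom C (Dg C n) (Dg C n)"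
    and c: "c \<in> hom C (Dg C n) (Dg C n)"
    and e0: "Cmp C a (sg C n) = Cmp C b (tu C n)"
    and e1: "Cmp C b (sg C n) = Cmp C c (sg C n)" and e2: "Cmp C a (tu C n) = Cmp C c (tu C n)"
    and u: "u \<in> Gob (Dg C n)"
  shows "(cmpn (Gar a u) (Gar b u), Gar c u) \<in> R"
proof -
  obtain m where m: "m \<in> hom C (gs C (bin n (n - 1))) (Dg C n)"
    "Cmp C m (gi C (bin n (n - 1)) 0) = a" "Cmp C m (gi C (bin n (n - 1)) 1) = b"
    using bin_univ[OF j2 D_ob a b] e0 unfolding sgit_n tuit_n by blast
  have eq: "cmpn (Gar a u) (Gar b u) = Gar (Cmp C m (nab P n (n - 1))) u"
    using comp_map[OF m(1) u] m(2,3) by simp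
  have h: "Cmp C m (nab P n (n - 1)) \<in> hom C (Dg C n) (Dg C n)" using comp_hom[OF nab_hom[OF j2] m(1)] .
  show ?thesis unfolding eq
    by (rule endo_lift[OF h c _ _ u]) (use nab_through[OF m(1)] m e1 e2 in simp_all)
qed

lemma kapn_hom: "kap P (n - 1) \<in> hom C (Dg C n) (Dg C (n - 1))" using kap_hom[of "n - 1", unfolded nS] .
lemma kapn_st: "Cmp C (kap P (n - 1)) (sg C n) = Idm C (Dg C (n - 1)) \<and> Cmp C (kap P (n - 1)) (tu C n) = Idm C (Dg C (n - 1))"
  using kap_st[of "n - 1", unfolded nS] .
lemma wwn_hom: "ww P n (n - 1) \<in> hom C (Dg C n) (Dg C n)" using ww_hom[OF j2] .
lemma wwn_st: "Cmp C (ww P n (n - 1)) (sg C n) = tu C n \<and> Cmp C (ww P n (n - 1)) (tu C n) = sg C n"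
  using ww_st[OF n1] .

lemma sk_hom: "Cmp C (sg C n) (kap P (n - 1)) \<in> hom C (Dg C n) (Dg C n)" using comp_hom[OF kapn_hom sgn_hom] .
lemma tk_hom: "Cmp C (tu C n) (kap P (n - 1)) \<in> hom C (Dg C n) (Dg C n)" using comp_hom[OF kapn_hom tun_hom] .
lemma sk_s: "Cmp C (Cmp C (sg C n) (kap P (n - 1))) (sg C n) = sg C n"
  using assoc[OF sgn_hom kapn_hom sgn_hom] kapn_st idr[OF sgn_hom] by simp
lemma sk_t: "Cmp C (Cmp C (sg C n) (kap P (n - 1))) (tu C n) = sg C n"
  using assoc[OF tun_hom kapn_hom sgn_hom] kapn_st idr[OF sgn_hom] by simp
lemma tk_s: "Cmp C (Cmp C (tu C n) (kap P (n - 1))) (sg C n) = tu C n"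
  using assoc[OF sgn_hom kapn_hom tun_hom] kapn_st idr[OF tun_hom] by simp
lemma tk_t: "Cmp C (Cmp C (tu C n) (kap P (n - 1))) (tu C n) = tu C n"
  using assoc[OF tun_hom kapn_hom tun_hom] kapn_st idr[OF tun_hom] by simp

lemma kk: "u \<in> Gob (Dg C n) \<Longrightarrow> Gar (Cmp C (sg C n) (kap P (n - 1))) u = Gar (kap P (n - 1)) (Gar (sg C n) u)"
  using G_comp[OF kapn_hom sgn_hom] by simp
lemma kk': "u \<in> Gob (Dg C n) \<Longrightarrow> Gar (Cmp C (tu C n) (kap P (n - 1))) u = Gar (kap P (n - 1)) (Gar (tu C n) u)"
  using G_comp[OF kapn_hom tun_hom] by simp

lemma idn_hom: "Idm C (Dg C n) \<in> hom C (Dg C n) (Dg C n)" using id_hom[OF D_ob] .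

lemma unit_r: "u \<in> Gob (Dg C n) \<Longrightarrow> (cmpn u (Gar (kap P (n - 1)) (Gar (sg C n) u)), u) \<in> R"
  using comp_lift[OF idn_hom sk_hom idn_hom, of u] sk_s sk_t idl[OF sgn_hom] idl[OF tun_hom] kk G_id[OF D_ob]
  by simp

lemma unit_l: "u \<in> Gob (Dg C n) \<Longrightarrow> (cmpn (Gar (kap P (n - 1)) (Gar (tu C n) u)) u, u) \<in> R"
  using comp_lift[OF tk_hom idn_hom idn_hom, of u] tk_s tk_t idl[OF sgn_hom] idl[OF tun_hom] kk' G_id[OF D_ob]
  by simp

lemma inv_l: "u \<in> Gob (Dg C n) \<Longrightarrow> (cmpn (Gar (ww P n (n - 1)) u) u, Gar (kap P (n - 1)) (Gar (sg C n) u)) \<in> R"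
  using comp_lift[OF wwn_hom idn_hom sk_hom, of u] wwn_st sk_s sk_t idl[OF sgn_hom] idl[OF tun_hom] kk G_id[OF D_ob]
  by simp

lemma inv_r: "u \<in> Gob (Dg C n) \<Longrightarrow> (cmpn u (Gar (ww P n (n - 1)) u), Gar (kap P (n - 1)) (Gar (tu C n) u)) \<in> R"
  using comp_lift[OF idn_hom wwn_hom tk_hom, of u] wwn_st tk_s tk_t idl[OF sgn_hom] idl[OF tun_hom] kk' G_id[OF D_ob]
  by simp


lemmas sgit_n' = sgit_n[simplified]
lemmas tuit_n' = tuit_n[simplified]

abbreviation "T3 \<equiv> ([n, n, n], [n - 1, n - 1])"

lemma assoc_R:
  assumes w: "w \<in> Gob (Dg C n)" and v: "v \<in> Gob (Dg C n)" and u: "u \<in> Gob (Dg C n)"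
    and c1: "Gar (sg C n) w = Gar (tu C n) v" and c2: "Gar (sg C n) v = Gar (tu C n) u"
  shows "(cmpn (cmpn w v) u, cmpn w (cmpn v u)) \<in> R"
proof -
  have tab: "table T3" unfolding table_def using j2 by (simp add: less_Suc_eq)
  have dim: "table_dim T3 \<le> Suc n" unfolding table_dim_def by simp
  have col: "is_colimit C T3 (gs C T3) (gi C T3)" using colim[OF tab] .
  have ob: "gs C T3 \<in> Ob C" using col unfolding is_colimit_def by blast
  have coc: "cocone C T3 (gs C T3) (gi C T3)" using col unfolding is_colimit_def by blast
  have H: "\<forall>k < length [n, n, n]. gi C T3 k \<in> hom C (Dg C ([n, n, n] ! k)) (gs C T3)"
    using coc unfolding cocone_def Let_def fst_conv snd_conv by blast
  have E: "\<forall>k < length [n - 1, n - 1]. Cmp C (gi C T3 k) (sgit C ([n, n, n] ! k) ([n - 1, n - 1] ! k)) =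
      Cmp C (gi C T3 (k + 1)) (tuit C ([n, n, n] ! (k + 1)) ([n - 1, n - 1] ! k))"
    using coc unfolding cocone_def Let_def fst_conv snd_conv by blast
  have i0: "gi C T3 0 \<in> hom C (Dg C n) (gs C T3)" using H[rule_format, of 0] by simp
  have i1: "gi C T3 1 \<in> hom C (Dg C n) (gs C T3)" using H[rule_format, of 1] by simp
  have i2: "gi C T3 2 \<in> hom C (Dg C n) (gs C T3)" using H[rule_format, of 2] by simp
  have e0: "Cmp C (gi C T3 0) (sg C n) = Cmp C (gi C T3 1) (tu C n)"
    using E[rule_format, of 0] by (simp add: sgit_n' tuit_n')
  have e1: "Cmp C (gi C T3 1) (sg C n) = Cmp C (gi C T3 2) (tu C n)"
    using E[rule_format, of 1] by (simp add: sgit_n' tuit_n' numeral_2_eq_2)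
  have us: "[w, v, u] \<in> fiber_prod C Gob Gar T3" unfolding fiber_prod_def Let_def fst_conv snd_conv
  proof (intro CollectI conjI allI impI)
    show "length [w, v, u] = length [n, n, n]" by simp
    fix k assume "k < length [n, n, n]" then have "k = 0 \<or> k = 1 \<or> k = 2" by auto
    then show "[w, v, u] ! k \<in> Gob (Dg C ([n, n, n] ! k))" using w v u by auto
  next
    fix k assume "k < length [n - 1, n - 1]" then have "k = 0 \<or> k = 1" by auto
    then show "Gar (sgit C ([n, n, n] ! k) ([n - 1, n - 1] ! k)) ([w, v, u] ! k) =
        Gar (tuit C ([n, n, n] ! (k + 1)) ([n - 1, n - 1] ! k)) ([w, v, u] ! (k + 1))"
      using c1 c2 by (auto simp: sgit_n' tuit_n' numeral_2_eq_2)
  qed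
  obtain z where z: "z \<in> Gob (gs C T3)" "\<forall>k < length (fst T3). Gar (gi C T3 k) z = [w, v, u] ! k"
    using gen_ex[OF tab us] by blast
  have z0: "Gar (gi C T3 0) z = w" using z(2)[rule_format, of 0] by simp
  have z1: "Gar (gi C T3 1) z = v" using z(2)[rule_format, of 1] by simp
  have z2: "Gar (gi C T3 2) z = u" using z(2)[rule_format, of 2] by (simp add: numeral_2_eq_2)
  note nh = nab_hom[OF j2]
  obtain M where M: "M \<in> hom C (gs C (bin n (n - 1))) (gs C T3)"
    "Cmp C M (gi C (bin n (n - 1)) 0) = gi C T3 0" "Cmp C M (gi C (bin n (n - 1)) 1) = gi C T3 1"
    using bin_univ[OF j2 ob i0 i1] e0 unfolding sgit_n tuit_n by blast
  obtain N where N: "N \<in> hom C (gs C (bin n (n - 1))) (gs C T3)"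
    "Cmp C N (gi C (bin n (n - 1)) 0) = gi C T3 1" "Cmp C N (gi C (bin n (n - 1)) 1) = gi C T3 2"
    using bin_univ[OF j2 ob i1 i2] e1 unfolding sgit_n tuit_n by blast
  have Mh: "Cmp C M (nab P n (n - 1)) \<in> hom C (Dg C n) (gs C T3)" using comp_hom[OF nh M(1)] .
  have Nh: "Cmp C N (nab P n (n - 1)) \<in> hom C (Dg C n) (gs C T3)" using comp_hom[OF nh N(1)] .
  have cL: "Cmp C (Cmp C M (nab P n (n - 1))) (sg C n) = Cmp C (gi C T3 2) (tu C n)"
    using nab_through(1)[OF M(1)] M(3) e1 by simp
  obtain L where L: "L \<in> hom C (gs C (bin n (n - 1))) (gs C T3)"
    "Cmp C L (gi C (bin n (n - 1)) 0) = Cmp C M (nab P n (n - 1))" "Cmp C L (gi C (bin n (n - 1)) 1) = gi C T3 2"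
    using bin_univ[OF j2 ob Mh i2] cL unfolding sgit_n tuit_n by blast
  have cR: "Cmp C (gi C T3 0) (sg C n) = Cmp C (Cmp C N (nab P n (n - 1))) (tu C n)"
    using nab_through(2)[OF N(1)] N(2) e0 by simp
  obtain K where K: "K \<in> hom C (gs C (bin n (n - 1))) (gs C T3)"
    "Cmp C K (gi C (bin n (n - 1)) 0) = gi C T3 0" "Cmp C K (gi C (bin n (n - 1)) 1) = Cmp C N (nab P n (n - 1))"
    using bin_univ[OF j2 ob i0 Nh] cR unfolding sgit_n tuit_n by blast
  have Ah: "Cmp C L (nab P n (n - 1)) \<in> hom C (Dg C n) (gs C T3)" using comp_hom[OF nh L(1)] .
  have Bh: "Cmp C K (nab P n (n - 1)) \<in> hom C (Dg C n) (gs C T3)" using comp_hom[OF nh K(1)] .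
  have p1: "Cmp C (Cmp C L (nab P n (n - 1))) (sg C n) = Cmp C (Cmp C K (nab P n (n - 1))) (sg C n)"
    using nab_through(1)[OF L(1)] nab_through(1)[OF K(1)] nab_through(1)[OF N(1)] L(3) K(3) N(3) by simp
  have p2: "Cmp C (Cmp C L (nab P n (n - 1))) (tu C n) = Cmp C (Cmp C K (nab P n (n - 1))) (tu C n)"
    using nab_through(2)[OF L(1)] nab_through(2)[OF K(1)] nab_through(2)[OF M(1)] L(2) K(2) M(2) by simp
  have LR: "(Gar (Cmp C L (nab P n (n - 1))) z, Gar (Cmp C K (nab P n (n - 1))) z) \<in> R"
    using lift_gen[OF tab dim Ah Bh p1 p2 z(1)] .
  have gM: "Gar (Cmp C M (nab P n (n - 1))) z = cmpn w v"
    using comp_map[OF M(1) z(1)] M(2,3) z0 z1 by simp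
  have gN: "Gar (Cmp C N (nab P n (n - 1))) z = cmpn v u"
    using comp_map[OF N(1) z(1)] N(2,3) z1 z2 by simp
  have gL: "Gar (Cmp C L (nab P n (n - 1))) z = cmpn (cmpn w v) u"
    using comp_map[OF L(1) z(1)] L(2,3) gM z2 by simp
  have gK: "Gar (Cmp C K (nab P n (n - 1))) z = cmpn w (cmpn v u)"
    using comp_map[OF K(1) z(1)] K(2,3) gN z0 by simp
  show ?thesis using LR gL gK by simp
qed


abbreviation "AA \<equiv> Gob (Dg C n)"

lemma cls_in: "u \<in> AA \<Longrightarrow> R``{u} \<in> AA // R" by (rule quotientI)

lemma cls_eq: "u \<in> AA \<Longrightarrow> u' \<in> AA \<Longrightarrow> (u, u') \<in> R \<Longrightarrow> R``{u} = R``{u'}"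
  using eq_equiv_class_iff[OF R_equiv] by blast

lemma src_cls: assumes "u \<in> AA" shows "Pi_src C Gar n (R``{u}) = Gar (sg C n) u"
proof -
  have "Gar (sg C n) ` (R``{u}) = {Gar (sg C n) u}"
  proof
    show "Gar (sg C n) ` (R``{u}) \<subseteq> {Gar (sg C n) u}" using R_st by auto
    show "{Gar (sg C n) u} \<subseteq> Gar (sg C n) ` (R``{u})" using R_refl[OF assms] by auto
  qed
  then show ?thesis unfolding Pi_src_def by simp
qed

lemma tgt_cls: assumes "u \<in> AA" shows "Pi_tgt C Gar n (R``{u}) = Gar (tu C n) u"
proof -
  have "Gar (tu C n) ` (R``{u}) = {Gar (tu C n) u}"
  proof
    show "Gar (tu C n) ` (R``{u}) \<subseteq> {Gar (tu C n) u}" using R_st by auto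
    show "{Gar (tu C n) u} \<subseteq> Gar (tu C n) ` (R``{u})" using R_refl[OF assms] by auto
  qed
  then show ?thesis unfolding Pi_tgt_def by simp
qed

lemma comp_cls:
  assumes v: "v \<in> AA" and u: "u \<in> AA" and c: "Gar (sg C n) v = Gar (tu C n) u"
  shows "Pi_comp C P Gob Gar n (R``{v}) (R``{u}) = R``{cmpn v u}"
proof -
  have "{R `` {gcomp C P Gob Gar n (n - 1) v' u'} | v' u'.
        v' \<in> R``{v} \<and> u' \<in> R``{u} \<and> Gar (sg C n) v' = Gar (tu C n) u'} = {R``{cmpn v u}}"
  proof
    show "{R `` {gcomp C P Gob Gar n (n - 1) v' u'} | v' u'.
        v' \<in> R``{v} \<and> u' \<in> R``{u} \<and> Gar (sg C n) v' = Gar (tu C n) u'} \<subseteq> {R``{cmpn v u}}"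
    proof
      fix X assume "X \<in> {R `` {gcomp C P Gob Gar n (n - 1) v' u'} | v' u'.
        v' \<in> R``{v} \<and> u' \<in> R``{u} \<and> Gar (sg C n) v' = Gar (tu C n) u'}"
      then obtain v' u' where X: "X = R `` {cmpn v' u'}"
        and h: "v' \<in> R``{v}" "u' \<in> R``{u}" "Gar (sg C n) v' = Gar (tu C n) u'" by blast
      have vv: "(v, v') \<in> R" and uu: "(u, u') \<in> R" using h by auto
      have r: "(cmpn v u, cmpn v' u') \<in> R" using R_compat[OF vv uu c] .
      then have "cmpn v u \<in> AA" "cmpn v' u' \<in> AA" using R_iff by auto
      then have "R `` {cmpn v' u'} = R `` {cmpn v u}" using cls_eq r by metis
      then show "X \<in> {R``{cmpn v u}}" using X by simp
    qed
    show "{R``{cmpn v u}} \<subseteq> {R `` {gcomp C P Gob Gar n (n - 1) v' u'} | v' u'.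
        v' \<in> R``{v} \<and> u' \<in> R``{u} \<and> Gar (sg C n) v' = Gar (tu C n) u'}"
      using R_refl[OF v] R_refl[OF u] c by blast
  qed
  then show ?thesis unfolding Pi_comp_def by simp
qed

lemma groupoid: "is_groupoid (Pi_obj C Gob n) (Pi_arr C Gob Gar n) (Pi_src C Gar n) (Pi_tgt C Gar n)
           (Pi_comp C P Gob Gar n) (Pi_id C P Gob Gar n)"
  unfolding is_groupoid_def Pi_obj_def Pi_arr_def Pi_id_def
proof (intro conjI ballI impI)
  fix f assume "f \<in> AA // R"
  then obtain u where u: "u \<in> AA" and f: "f = R``{u}" by (rule quotientE)
  show "Pi_src C Gar n f \<in> Gob (Dg C (n - 1))" unfolding f src_cls[OF u] using G_mem[OF sgn_hom u] .
  show "Pi_tgt C Gar n f \<in> Gob (Dg C (n - 1))" unfolding f tgt_cls[OF u] using G_mem[OF tun_hom u] .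
next
  fix x assume x: "x \<in> Gob (Dg C (n - 1))"
  have k: "Gar (kap P (n - 1)) x \<in> AA" using G_mem[OF kapn_hom x] .
  show "R `` {Gar (kap P (n - 1)) x} \<in> AA // R" using cls_in[OF k] .
  show "Pi_src C Gar n (R `` {Gar (kap P (n - 1)) x}) = x"
    unfolding src_cls[OF k] using G_comp[OF sgn_hom kapn_hom x, symmetric] kapn_st G_id[OF D_ob x] by simp
  show "Pi_tgt C Gar n (R `` {Gar (kap P (n - 1)) x}) = x"
    unfolding tgt_cls[OF k] using G_comp[OF tun_hom kapn_hom x, symmetric] kapn_st G_id[OF D_ob x] by simp
next
  fix f g assume "f \<in> AA // R" "g \<in> AA // R" and sg: "Pi_src C Gar n g = Pi_tgt C Gar n f"
  then obtain u v where u: "u \<in> AA" and f: "f = R``{u}" and v: "v \<in> AA" and g: "g = R``{v}"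
    by (metis quotientE)
  have c: "Gar (sg C n) v = Gar (tu C n) u" using sg unfolding f g src_cls[OF v] tgt_cls[OF u] .
  note cp = comp_props[OF v u c]
  show "Pi_comp C P Gob Gar n g f \<in> AA // R" unfolding f g comp_cls[OF v u c] using cls_in[OF cp(1)] .
  show "Pi_src C Gar n (Pi_comp C P Gob Gar n g f) = Pi_src C Gar n f"
    unfolding f g comp_cls[OF v u c] src_cls[OF cp(1)] src_cls[OF u] using cp(2) .
  show "Pi_tgt C Gar n (Pi_comp C P Gob Gar n g f) = Pi_tgt C Gar n g"
    unfolding f g comp_cls[OF v u c] tgt_cls[OF cp(1)] tgt_cls[OF v] using cp(3) .
next
  fix f g h assume "f \<in> AA // R" "g \<in> AA // R" "h \<in> AA // R"
    and sg1: "Pi_src C Gar n g = Pi_tgt C Gar n f" and sg2: "Pi_src C Gar n h = Pi_tgt C Gar n g"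
  then obtain u v w where u: "u \<in> AA" and f: "f = R``{u}" and v: "v \<in> AA" and g: "g = R``{v}"
    and w: "w \<in> AA" and h: "h = R``{w}"
    by (metis quotientE)
  have c1: "Gar (sg C n) v = Gar (tu C n) u" using sg1 unfolding f g src_cls[OF v] tgt_cls[OF u] .
  have c2: "Gar (sg C n) w = Gar (tu C n) v" using sg2 unfolding g h src_cls[OF w] tgt_cls[OF v] .
  note cp1 = comp_props[OF v u c1]
  note cp2 = comp_props[OF w v c2]
  have c3: "Gar (sg C n) w = Gar (tu C n) (cmpn v u)" using c2 cp1(3) by simp
  have c4: "Gar (sg C n) (cmpn w v) = Gar (tu C n) u" using c1 cp2(2) by simp
  have "Pi_comp C P Gob Gar n h (Pi_comp C P Gob Gar n g f) = R``{cmpn w (cmpn v u)}"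
    unfolding f g h comp_cls[OF v u c1] comp_cls[OF w cp1(1) c3] ..
  also have "\<dots> = R``{cmpn (cmpn w v) u}"
    using assoc_R[OF w v u c2 c1] R_sym R_iff cls_eq by metis
  also have "\<dots> = Pi_comp C P Gob Gar n (Pi_comp C P Gob Gar n h g) f"
    unfolding f g h comp_cls[OF w v c2] comp_cls[OF cp2(1) u c4] ..
  finally show "Pi_comp C P Gob Gar n h (Pi_comp C P Gob Gar n g f) =
       Pi_comp C P Gob Gar n (Pi_comp C P Gob Gar n h g) f" .
next
  fix f assume "f \<in> AA // R"
  then obtain u where u: "u \<in> AA" and f: "f = R``{u}" by (rule quotientE)
  let ?ks = "Gar (kap P (n - 1)) (Gar (sg C n) u)"
  let ?kt = "Gar (kap P (n - 1)) (Gar (tu C n) u)"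
  have sx: "Gar (sg C n) u \<in> Gob (Dg C (n - 1))" using G_mem[OF sgn_hom u] .
  have tx: "Gar (tu C n) u \<in> Gob (Dg C (n - 1))" using G_mem[OF tun_hom u] .
  have ks: "?ks \<in> AA" using G_mem[OF kapn_hom sx] .
  have kt: "?kt \<in> AA" using G_mem[OF kapn_hom tx] .
  have ks_t: "Gar (tu C n) ?ks = Gar (sg C n) u"
    using G_comp[OF tun_hom kapn_hom sx, symmetric] kapn_st G_id[OF D_ob sx] by simp
  have kt_s: "Gar (sg C n) ?kt = Gar (tu C n) u"
    using G_comp[OF sgn_hom kapn_hom tx, symmetric] kapn_st G_id[OF D_ob tx] by simp
  have cu1: "Gar (sg C n) u = Gar (tu C n) ?ks" using ks_t by simp
  have cu2: "Gar (sg C n) ?kt = Gar (tu C n) u" using kt_s .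
  have cmu1: "cmpn u ?ks \<in> AA" using comp_props(1)[OF u ks cu1] .
  have cmu2: "cmpn ?kt u \<in> AA" using comp_props(1)[OF kt u cu2] .
  show "Pi_comp C P Gob Gar n f (R `` {Gar (kap P (n - 1)) (Pi_src C Gar n f)}) = f"
    unfolding f src_cls[OF u] comp_cls[OF u ks cu1] using cls_eq[OF cmu1 u unit_r[OF u]] .
  show "Pi_comp C P Gob Gar n (R `` {Gar (kap P (n - 1)) (Pi_tgt C Gar n f)}) f = f"
    unfolding f tgt_cls[OF u] comp_cls[OF kt u cu2] using cls_eq[OF cmu2 u unit_l[OF u]] .
next
  fix f assume "f \<in> AA // R"
  then obtain u where u: "u \<in> AA" and f: "f = R``{u}" by (rule quotientE)
  let ?w = "Gar (ww P n (n - 1)) u"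
  let ?ks = "Gar (kap P (n - 1)) (Gar (sg C n) u)"
  let ?kt = "Gar (kap P (n - 1)) (Gar (tu C n) u)"
  have wA: "?w \<in> AA" using G_mem[OF wwn_hom u] .
  have ws: "Gar (sg C n) ?w = Gar (tu C n) u" using G_comp[OF sgn_hom wwn_hom u, symmetric] wwn_st by simp
  have wt: "Gar (tu C n) ?w = Gar (sg C n) u" using G_comp[OF tun_hom wwn_hom u, symmetric] wwn_st by simp
  have sx: "Gar (sg C n) u \<in> Gob (Dg C (n - 1))" using G_mem[OF sgn_hom u] .
  have tx: "Gar (tu C n) u \<in> Gob (Dg C (n - 1))" using G_mem[OF tun_hom u] .
  have ks: "?ks \<in> AA" using G_mem[OF kapn_hom sx] .
  have kt: "?kt \<in> AA" using G_mem[OF kapn_hom tx] .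
  have cu2: "Gar (sg C n) u = Gar (tu C n) ?w" using wt by simp
  have m1: "cmpn ?w u \<in> AA" using comp_props(1)[OF wA u ws] .
  have m2: "cmpn u ?w \<in> AA" using comp_props(1)[OF u wA cu2] .
  show "\<exists>g \<in> AA // R. Pi_src C Gar n g = Pi_tgt C Gar n f \<and> Pi_tgt C Gar n g = Pi_src C Gar n f \<and>
        Pi_comp C P Gob Gar n g f = R `` {Gar (kap P (n - 1)) (Pi_src C Gar n f)} \<and>
        Pi_comp C P Gob Gar n f g = R `` {Gar (kap P (n - 1)) (Pi_tgt C Gar n f)}"
  proof (intro bexI conjI)
    show "R``{?w} \<in> AA // R" using cls_in[OF wA] .
    show "Pi_src C Gar n (R``{?w}) = Pi_tgt C Gar n f" unfolding f src_cls[OF wA] tgt_cls[OF u] using ws .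
    show "Pi_tgt C Gar n (R``{?w}) = Pi_src C Gar n f" unfolding f tgt_cls[OF wA] src_cls[OF u] using wt .
    show "Pi_comp C P Gob Gar n (R``{?w}) f = R `` {Gar (kap P (n - 1)) (Pi_src C Gar n f)}"
      unfolding f src_cls[OF u] comp_cls[OF wA u ws] using cls_eq[OF m1 ks inv_l[OF u]] .
    show "Pi_comp C P Gob Gar n f (R``{?w}) = R `` {Gar (kap P (n - 1)) (Pi_tgt C Gar n f)}"
      unfolding f tgt_cls[OF u] comp_cls[OF u wA cu2] using cls_eq[OF m2 kt inv_r[OF u]] .
  qed
qed

end

theorem proposition4:
  fixes C :: "('o, 'm) gext" and P :: "'m pregrp"
    and Gob :: "'o \<Rightarrow> 'x set" and Gar :: "'m \<Rightarrow> 'x \<Rightarrow> 'x" and n :: nat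
  assumes "globular_extension C"
    and "contractible C"
    and "pregroupoidal C P"
    and "infty_groupoid C Gob Gar"
    and "n \<ge> 1"
  shows "is_groupoid (Pi_obj C Gob n) (Pi_arr C Gob Gar n) (Pi_src C Gar n) (Pi_tgt C Gar n)
           (Pi_comp C P Gob Gar n) (Pi_id C P Gob Gar n)"
proof -
  have "ps C P Gob Gar n" using assms by (simp add: ps_def)
  then show ?thesis by (rule ps.groupoid)
qed

end
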